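(* Let $k=\mathbb R$ or $\mathbb C$, let $(V,g)$ be an inner product vector space over $k$, let $f\in\operatorname{End}_k(V)$, and let $\mathcal H_f=\{H_i\}_{i\in I}$ be a family of finite-dimensional $f$-invariant subspaces with $V=\bigoplus_{i\in I}H_i$; write $f_i=f|_{H_i}$ and $\mathcal H_f^\perp=\bigoplus_{i\in I}[\operatorname{Im} f_i]_i^\perp$. Then $\mathcal H_f^\perp=[\operatorname{Im} f]^\perp$ if and only if $[\operatorname{Im} f_i]_i^\perp\subseteq\big[\sum_{j\ne i}\operatorname{Im} f_j\big]^\perp$ for every $i\in I$.
   Context: An inner product is linear in the first argument, conjugate-symmetric and positive definite. $V=\bigoplus_{i\in I}H_i$ means the natural map $\bigoplus H_i\to V$ is an isomorphism. For a subspace $W\subseteq V$, $W^\perp=\{v\in V:g(w,v)=0\ \forall w\in W\}$; for a subspace $W\subseteq H_i$, $[W]_i^\perp=\{v\in H_i:g(w,v)=0\ \forall w\in W\}$. *)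

theory Defs
  imports "HOL-Analysis.Analysis"
begin

definition is_inner_product ::
  "('k::real_field \<Rightarrow> 'v::ab_group_add \<Rightarrow> 'v) \<Rightarrow> ('k \<Rightarrow> 'k) \<Rightarrow> ('v \<Rightarrow> 'v \<Rightarrow> 'k) \<Rightarrow> bool" where
  "is_inner_product sc conjg g \<longleftrightarrow>
     (\<forall>u v w. g (u + v) w = g u w + g v w) \<and>
     (\<forall>a u w. g (sc a u) w = a * g u w) \<and>
     (\<forall>u w. g u w = conjg (g w u)) \<and>
     (\<forall>v. v \<noteq> 0 \<longrightarrow> (\<exists>r::real. r > 0 \<and> g v v = of_real r))"

definition fin_dim_subspace :: "('k::field \<Rightarrow> 'v::ab_group_add \<Rightarrow> 'v) \<Rightarrow> 'v set \<Rightarrow> bool" where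
  "fin_dim_subspace sc W \<longleftrightarrow>
     module.subspace sc W \<and> (\<exists>B. finite B \<and> B \<subseteq> W \<and> module.span sc B = W)"

definition internal_direct_sum :: "('k::field \<Rightarrow> 'v::ab_group_add \<Rightarrow> 'v) \<Rightarrow> 'i set \<Rightarrow> ('i \<Rightarrow> 'v set) \<Rightarrow> bool" where
  "internal_direct_sum sc I H \<longleftrightarrow>
     (\<forall>i\<in>I. module.subspace sc (H i)) \<and>
     (\<forall>v. \<exists>!h. (\<forall>i\<in>I. h i \<in> H i) \<and> (\<forall>i. i \<notin> I \<longrightarrow> h i = 0) \<and>
              finite {i. h i \<noteq> 0} \<and> v = (\<Sum>i\<in>{i. h i \<noteq> 0}. h i))"

text \<open>W^\<perp> relative to a subspace X (X = UNIV gives W^\<perp> in V, X = H i gives [W]_i^\<perp>).\<close>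
definition orth_in :: "('v \<Rightarrow> 'v \<Rightarrow> 'k::zero) \<Rightarrow> 'v set \<Rightarrow> 'v set \<Rightarrow> 'v set" where
  "orth_in g X W = {v \<in> X. \<forall>w\<in>W. g w v = 0}"

end

theory Submission imports Defs begin

locale ips = vector_space scale for scale :: "'k::real_field \<Rightarrow> 'v::ab_group_add \<Rightarrow> 'v" +
  fixes g :: "'v \<Rightarrow> 'v \<Rightarrow> 'k" and conjg :: "'k \<Rightarrow> 'k"
  assumes ip: "is_inner_product scale conjg g" and c0: "conjg 0 = 0"
begin

lemma gadd: "g (u + v) w = g u w + g v w" using ip unfolding is_inner_product_def by blast
lemma gscale: "g (scale a u) w = a * g u w" using ip unfolding is_inner_product_def by blast
lemma gsym: "g u w = conjg (g w u)" using ip unfolding is_inner_product_def by blast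
lemma gpd: "v \<noteq> 0 \<Longrightarrow> g v v \<noteq> 0"
proof -
  assume "v \<noteq> 0"
  then obtain r :: real where "r > 0" "g v v = of_real r" using ip unfolding is_inner_product_def by blast
  then show ?thesis by simp
qed
lemma g0: "g 0 w = 0" using gadd[of 0 0 w] by simp
lemma gdiff: "g (u - v) w = g u w - g v w" using gadd[of "u - v" v w] by (simp add: algebra_simps)
lemma gflip: "g u w = 0 \<longleftrightarrow> g w u = 0" using gsym[of u w] gsym[of w u] c0 by auto

lemma sub1: "subspace {u. g u w = 0}"
  by (rule subspaceI) (auto simp: g0 gadd gscale)
lemma sub2: "subspace {u. g w u = 0}"
  using sub1[of w] by (simp add: gflip)
lemma sub3: "subspace (orth_in g UNIV S)"
proof -
  have "orth_in g UNIV S = (\<Inter>w\<in>S. {u. g w u = 0})" unfolding orth_in_def by auto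
  then show ?thesis using sub2 subspace_Int[of S "\<lambda>w. {u. g w u = 0}"] by simp
qed

lemma proj: "finite B \<Longrightarrow> \<exists>a\<in>span B. \<forall>w\<in>span B. g (v - a) w = 0"
proof (induction B arbitrary: v rule: finite_induct)
  case empty
  then show ?case using g0 gflip by auto
next
  case (insert b B)
  obtain ab where ab: "ab \<in> span B" "\<forall>w\<in>span B. g (b - ab) w = 0" using insert.IH by blast
  obtain a where a: "a \<in> span B" "\<forall>w\<in>span B. g (v - a) w = 0" using insert.IH by blast
  have sB: "span B \<subseteq> span (insert b B)" by (simp add: span_mono subset_insertI)
  define b' where "b' = b - ab"
  show ?case
  proof (cases "b' = 0")
    case True
    then have "b \<in> span B" using ab b'_def by simp
    then show ?thesis using a span_redundant by auto
  next
    case False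
    define c where "c = g (v - a) b' / g b' b'"
    define a' where "a' = a + scale c b'"
    have b'sp: "b' \<in> span (insert b B)" unfolding b'_def
      using ab sB by (meson insertI1 span_base span_diff subsetD)
    have a'sp: "a' \<in> span (insert b B)" unfolding a'_def
      using a sB b'sp by (meson span_add span_scale subsetD)
    have e: "g (v - a') w = g (v - a) w - c * g b' w" for w
      unfolding a'_def by (simp add: diff_add_eq_diff_diff_swap gdiff gscale)
    let ?Z = "{w. g (v - a') w = 0}"
    have "span B \<subseteq> ?Z" using e a ab b'_def by auto
    moreover have "b' \<in> ?Z" using e gpd[OF False] c_def by simp
    moreover have "ab \<in> ?Z" using \<open>span B \<subseteq> ?Z\<close> ab(1) by blast
    ultimately have "b' + ab \<in> ?Z" using subspace_add[OF sub2[of "v - a'"]] by blast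
    then have "b \<in> ?Z" by (simp add: b'_def)
    then have "insert b B \<subseteq> ?Z" using \<open>span B \<subseteq> ?Z\<close> span_superset by blast
    then have "span (insert b B) \<subseteq> ?Z" using sub2 span_minimal by blast
    then show ?thesis using a'sp by blast
  qed
qed

lemma decomp:
  assumes ds: "internal_direct_sum scale I H"
  obtains h S where "finite S" "S \<subseteq> I" "\<forall>i\<in>S. h i \<in> H i" "y = sum h S"
proof -
  have "\<exists>!h. (\<forall>i\<in>I. h i \<in> H i) \<and> (\<forall>i. i \<notin> I \<longrightarrow> h i = 0) \<and>
            finite {i. h i \<noteq> 0} \<and> y = (\<Sum>i\<in>{i. h i \<noteq> 0}. h i)"
    using ds unfolding internal_direct_sum_def by (elim conjE allE)
  then have "\<exists>h. (\<forall>i\<in>I. h i \<in> H i) \<and> (\<forall>i. i \<notin> I \<longrightarrow> h i = 0) \<and>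
            finite {i. h i \<noteq> 0} \<and> y = (\<Sum>i\<in>{i. h i \<noteq> 0}. h i)"
    by (rule ex1_implies_ex)
  then obtain h where h: "(\<forall>i\<in>I. h i \<in> H i) \<and> (\<forall>i. i \<notin> I \<longrightarrow> h i = 0) \<and>
            finite {i. h i \<noteq> 0} \<and> y = (\<Sum>i\<in>{i. h i \<noteq> 0}. h i)" ..
  from h have h1: "\<forall>i\<in>I. h i \<in> H i" by (rule conjunct1)
  from h have h2: "\<forall>i. i \<notin> I \<longrightarrow> h i = 0" by (elim conjE)
  from h have h3: "finite {i. h i \<noteq> 0}" by (elim conjE)
  from h have h4: "y = (\<Sum>i\<in>{i. h i \<noteq> 0}. h i)" by (elim conjE)
  have sub: "{i. h i \<noteq> 0} \<subseteq> I"
  proof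
    fix i assume "i \<in> {i. h i \<noteq> 0}"
    then show "i \<in> I" using h2 by auto
  qed
  show ?thesis
  proof (rule that[of "{i. h i \<noteq> 0}" h])
    show "finite {i. h i \<noteq> 0}" by (rule h3)
    show "{i. h i \<noteq> 0} \<subseteq> I" by (rule sub)
    show "\<forall>i\<in>{i. h i \<noteq> 0}. h i \<in> H i" using h1 sub by blast
    show "y = sum h {i. h i \<noteq> 0}" by (rule h4)
  qed
qed

lemma main:
  assumes lin: "Vector_Spaces.linear scale scale f"
  and HI: "\<forall>i\<in>I. fin_dim_subspace scale (H i) \<and> f ` H i \<subseteq> H i"
  and ds: "internal_direct_sum scale I H"
  shows "span (\<Union>i\<in>I. orth_in g (H i) (f ` H i)) = orth_in g UNIV (range f) \<longleftrightarrow>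
     (\<forall>i\<in>I. orth_in g (H i) (f ` H i) \<subseteq> orth_in g UNIV (span (\<Union>j\<in>I - {i}. f ` H j)))"
proof -
  interpret fh: module_hom scale scale f using lin module_hom_iff_linear by blast
  define K where "K i = orth_in g (H i) (f ` H i)" for i
  have sH: "subspace (H i)" "f ` H i \<subseteq> H i" if "i \<in> I" for i
    using HI that unfolding fin_dim_subspace_def by auto
  show ?thesis unfolding K_def[symmetric]
  proof
    assume E: "span (\<Union>i\<in>I. K i) = orth_in g UNIV (range f)"
    show "\<forall>i\<in>I. K i \<subseteq> orth_in g UNIV (span (\<Union>j\<in>I - {i}. f ` H j))"
    proof (intro ballI subsetI)
      fix i x assume i: "i \<in> I" and x: "x \<in> K i"
      then have "x \<in> span (\<Union>i\<in>I. K i)" by (meson UN_I span_base)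
      then have xo: "x \<in> orth_in g UNIV (range f)" using E by simp
      have "(\<Union>j\<in>I - {i}. f ` H j) \<subseteq> {u. g u x = 0}" using xo unfolding orth_in_def by auto
      then have "span (\<Union>j\<in>I - {i}. f ` H j) \<subseteq> {u. g u x = 0}" using sub1 span_minimal by blast
      then show "x \<in> orth_in g UNIV (span (\<Union>j\<in>I - {i}. f ` H j))" unfolding orth_in_def by auto
    qed
  next
    assume R: "\<forall>i\<in>I. K i \<subseteq> orth_in g UNIV (span (\<Union>j\<in>I - {i}. f ` H j))"
    have Kin: "x \<in> orth_in g UNIV (range f)" if i: "i \<in> I" and x: "x \<in> K i" for i x
    proof -
      have "g w x = 0" if "w \<in> range f" for w
      proof -
        obtain y where w: "w = f y" using \<open>w \<in> range f\<close> by blast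
        obtain h S where hS: "finite S" "S \<subseteq> I" "\<forall>i\<in>S. h i \<in> H i" "y = sum h S"
          by (rule decomp[OF ds, of y])
        have "f y = (\<Sum>j\<in>S. f (h j))" using hS fh.sum by simp
        also have "\<dots> \<in> {u. g u x = 0}"
        proof (rule subspace_sum[OF sub1])
          fix j assume j: "j \<in> S"
          show "f (h j) \<in> {u. g u x = 0}"
          proof (cases "j = i")
            case True
            then show ?thesis using x j hS unfolding K_def orth_in_def by auto
          next
            case False
            then have "f (h j) \<in> span (\<Union>j\<in>I - {i}. f ` H j)"
              using j hS by (intro span_base) blast
            then show ?thesis using R i x unfolding orth_in_def by blast
          qed
        qed
        finally show ?thesis using w by simp
      qed
      then show ?thesis unfolding orth_in_def by auto
    qed
    show "span (\<Union>i\<in>I. K i) = orth_in g UNIV (range f)"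
    proof
      show "span (\<Union>i\<in>I. K i) \<subseteq> orth_in g UNIV (range f)"
        using Kin by (intro span_minimal sub3) blast
    next
      show "orth_in g UNIV (range f) \<subseteq> span (\<Union>i\<in>I. K i)"
      proof
        fix v assume v: "v \<in> orth_in g UNIV (range f)"
        obtain h S where hS: "finite S" "S \<subseteq> I" "\<forall>i\<in>S. h i \<in> H i" "v = sum h S"
          by (rule decomp[OF ds, of v])
        have ex: "\<forall>i\<in>S. \<exists>y. y \<in> H i \<and> (\<forall>w\<in>f ` H i. g (h i - f y) w = 0)"
        proof
          fix i assume i: "i \<in> S"
          then have iI: "i \<in> I" using hS(2) by blast
          have "fin_dim_subspace scale (H i)" using HI iI by blast
          then obtain B where B: "finite B" "B \<subseteq> H i" "span B = H i"
            unfolding fin_dim_subspace_def by blast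
          have fe: "span (f ` B) = f ` H i" using fh.span_image B by simp
          obtain a where a: "a \<in> span (f ` B)" "\<forall>w\<in>span (f ` B). g (h i - a) w = 0"
            using proj[of "f ` B" "h i"] B by blast
          then show "\<exists>y. y \<in> H i \<and> (\<forall>w\<in>f ` H i. g (h i - f y) w = 0)" using fe by auto
        qed
        from bchoice[OF ex] obtain y where y: "\<forall>i\<in>S. y i \<in> H i \<and> (\<forall>w\<in>f ` H i. g (h i - f (y i)) w = 0)"
          by blast
        define k where "k i = h i - f (y i)" for i
        have kK: "k i \<in> K i" if "i \<in> S" for i
        proof -
          have iI: "i \<in> I" using that hS by blast
          have "f (y i) \<in> H i" using y that sH[OF iI] by blast
          then have "k i \<in> H i" unfolding k_def using sH[OF iI] hS that subspace_diff by blast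
          then show ?thesis using y that gflip unfolding K_def orth_in_def k_def by blast
        qed
        define a where "a = f (sum y S)"
        have ae: "a = v - sum k S" unfolding a_def k_def hS(4) fh.sum
          by (simp add: sum_subtractf)
        have "g a v = 0" using v unfolding orth_in_def a_def by blast
        moreover have "g a (sum k S) = 0"
        proof -
          have "sum k S \<in> {u. g a u = 0}"
          proof (rule subspace_sum[OF sub2])
            fix i assume "i \<in> S"
            then have "k i \<in> orth_in g UNIV (range f)" using Kin kK hS by blast
            then show "k i \<in> {u. g a u = 0}" unfolding orth_in_def a_def by blast
          qed
          then show ?thesis by simp
        qed
        ultimately have "v - sum k S \<in> {u. g a u = 0}" using sub2 subspace_diff by blast
        then have "g a a = 0" using ae by simp
        then have "a = 0" using gpd by blast
        then have "v = sum k S" using ae by simp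
        also have "\<dots> \<in> span (\<Union>i\<in>I. K i)"
          using kK hS by (intro span_sum span_base) blast
        finally show "v \<in> span (\<Union>i\<in>I. K i)" .
      qed
    qed
  qed
qed

end

theorem lemma3p18:
  shows
  "(\<forall>(sc :: real \<Rightarrow> 'v::ab_group_add \<Rightarrow> 'v) g f (I :: 'i set) H.
      vector_space sc \<longrightarrow> is_inner_product sc id g \<longrightarrow>
      Vector_Spaces.linear sc sc f \<longrightarrow>
      (\<forall>i\<in>I. fin_dim_subspace sc (H i) \<and> f ` H i \<subseteq> H i) \<longrightarrow>
      internal_direct_sum sc I H \<longrightarrow>
      (module.span sc (\<Union>i\<in>I. orth_in g (H i) (f ` H i)) = orth_in g UNIV (range f)
       \<longleftrightarrow> (\<forall>i\<in>I. orth_in g (H i) (f ` H i)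
               \<subseteq> orth_in g UNIV (module.span sc (\<Union>j\<in>I - {i}. f ` H j)))))
   \<and>
   (\<forall>(sc :: complex \<Rightarrow> 'w::ab_group_add \<Rightarrow> 'w) g f (I :: 'j set) H.
      vector_space sc \<longrightarrow> is_inner_product sc cnj g \<longrightarrow>
      Vector_Spaces.linear sc sc f \<longrightarrow>
      (\<forall>i\<in>I. fin_dim_subspace sc (H i) \<and> f ` H i \<subseteq> H i) \<longrightarrow>
      internal_direct_sum sc I H \<longrightarrow>
      (module.span sc (\<Union>i\<in>I. orth_in g (H i) (f ` H i)) = orth_in g UNIV (range f)
       \<longleftrightarrow> (\<forall>i\<in>I. orth_in g (H i) (f ` H i)
               \<subseteq> orth_in g UNIV (module.span sc (\<Union>j\<in>I - {i}. f ` H j)))))"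
proof (intro conjI allI impI)
  fix sc :: "real \<Rightarrow> 'v::ab_group_add \<Rightarrow> 'v" and g f and I :: "'i set" and H
  assume a: "vector_space sc" "is_inner_product sc id g" "Vector_Spaces.linear sc sc f"
    "\<forall>i\<in>I. fin_dim_subspace sc (H i) \<and> f ` H i \<subseteq> H i" "internal_direct_sum sc I H"
  have ipsI: "ips sc g id" unfolding ips_def ips_axioms_def using a(1,2) by simp
  show "module.span sc (\<Union>i\<in>I. orth_in g (H i) (f ` H i)) = orth_in g UNIV (range f)
       \<longleftrightarrow> (\<forall>i\<in>I. orth_in g (H i) (f ` H i)
               \<subseteq> orth_in g UNIV (module.span sc (\<Union>j\<in>I - {i}. f ` H j)))"
    by (rule ips.main[OF ipsI a(3-5)])
next
  fix sc :: "complex \<Rightarrow> 'w::ab_group_add \<Rightarrow> 'w" and g f and I :: "'j set" and H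
  assume a: "vector_space sc" "is_inner_product sc cnj g" "Vector_Spaces.linear sc sc f"
    "\<forall>i\<in>I. fin_dim_subspace sc (H i) \<and> f ` H i \<subseteq> H i" "internal_direct_sum sc I H"
  have ipsI: "ips sc g cnj" unfolding ips_def ips_axioms_def using a(1,2) by simp
  show "module.span sc (\<Union>i\<in>I. orth_in g (H i) (f ` H i)) = orth_in g UNIV (range f)
       \<longleftrightarrow> (\<forall>i\<in>I. orth_in g (H i) (f ` H i)
               \<subseteq> orth_in g UNIV (module.span sc (\<Union>j\<in>I - {i}. f ` H j)))"
    by (rule ips.main[OF ipsI a(3-5)])
qed

end
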